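(* Let $d\ge3$ and $\varepsilon\in(0,1]$. Then $$N_{[\,]}(\varepsilon,\mathcal R_d,\|\cdot\|_{L^1})\le\Big(\frac{d^d}{d!}\Big)^2\Big(\frac2\varepsilon-\frac12\Big(1-\frac3d\Big)\Big)^{2d}\le\Big(\frac{d^d}{d!}\Big)^2\Big(\frac2\varepsilon\Big)^{2d}.$$
   Context: Let $I^d=[0,1)^d$ and $\lambda^d$ be Lebesgue measure; all norms are in $L^1(I^d,\lambda^d)$. For $y,z\in I^d$ let $[y,z)=\prod_{i=1}^d[y_i,z_i)$, and let $\mathcal R_d=\{1_{[y,z)}: y,z\in I^d\}$ be the set of indicator functions of half-open axis-parallel boxes in $I^d$. For functions $\ell,u\in L^1$, the bracket $[\ell,u]$ is $\{f\in L^1:\ell\le f\le u\text{ pointwise}\}$; it is an $\varepsilon$-bracket if $\|u-\ell\|_{L^1}\le\varepsilon$. The bracketing number $N_{[\,]}(\varepsilon,\mathcal F,\|\cdot\|_{L^1})$ is the minimal number of $\varepsilon$-brackets whose union contains $\mathcal F$. *)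

theory Defs
  imports "HOL-Analysis.Analysis"
begin

text \<open>The dimension d is CARD('n); points of R^d are vectors of type real^'n.\<close>

definition unit_cube :: "(real^'n) set" where
  "unit_cube = {x. \<forall>i. 0 \<le> x$i \<and> x$i < 1}"

definition box_co :: "real^'n \<Rightarrow> real^'n \<Rightarrow> (real^'n) set" where
  "box_co y z = {x. \<forall>i. y$i \<le> x$i \<and> x$i < z$i}"

definition L1_cube :: "(real^'n \<Rightarrow> real) \<Rightarrow> bool" where
  "L1_cube f \<longleftrightarrow> set_integrable lborel (unit_cube :: (real^'n) set) f"

definition L1_norm :: "(real^'n \<Rightarrow> real) \<Rightarrow> real" where
  "L1_norm f = (LINT x:(unit_cube :: (real^'n) set)|lborel. \<bar>f x\<bar>)"

definition bracket :: "(real^'n \<Rightarrow> real) \<Rightarrow> (real^'n \<Rightarrow> real) \<Rightarrow> (real^'n \<Rightarrow> real) set" where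
  "bracket l u = {f. L1_cube f \<and> (\<forall>x\<in>unit_cube. l x \<le> f x \<and> f x \<le> u x)}"

definition eps_bracket :: "real \<Rightarrow> (real^'n \<Rightarrow> real) \<Rightarrow> (real^'n \<Rightarrow> real) \<Rightarrow> bool" where
  "eps_bracket eps l u \<longleftrightarrow> L1_cube l \<and> L1_cube u \<and> L1_norm (\<lambda>x. u x - l x) \<le> eps"

text \<open>Minimal number of eps-brackets covering F (infinity if none).\<close>
definition bracketing_number :: "real \<Rightarrow> (real^'n \<Rightarrow> real) set \<Rightarrow> ereal" where
  "bracketing_number eps F =
     (INF B \<in> {B. finite B \<and> (\<forall>(l,u)\<in>B. eps_bracket eps l u)
                 \<and> F \<subseteq> (\<Union>(l,u)\<in>B. bracket l u)}. ereal (real (card B)))"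

definition rect_class :: "(real^'n \<Rightarrow> real) set" where
  "rect_class = {indicator (box_co y z) | y z. y \<in> unit_cube \<and> z \<in> unit_cube}"

end

theory Submission
  imports Defs
begin

definition Sb :: "nat \<Rightarrow> nat \<Rightarrow> nat" where "Sb m N = (\<Sum>i<Suc m. (N+i) choose (2*i))"
definition Tb :: "nat \<Rightarrow> nat \<Rightarrow> nat" where "Tb m N = (\<Sum>i<m. (N+i+1) choose (2*i+1))"

fun Gc :: "nat \<Rightarrow> nat \<Rightarrow> nat" where
  "Gc 0 N = 1"
| "Gc (Suc m) N = (\<Sum>j<N. (N-j) * Gc m (max 1 (j-1)))"

lemma Sb_Suc: "Sb m (Suc N) = Sb m N + Tb m N"
proof -
  have "Sb m (Suc N) = 1 + (\<Sum>i<m. (Suc N + Suc i) choose (2*Suc i))"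
    unfolding Sb_def by (subst sum.lessThan_Suc_shift) simp
  also have "\<dots> = 1 + (\<Sum>i<m. ((N + Suc i) choose (2*i+2)) + ((N+i+1) choose (2*i+1)))"
    by (intro arg_cong2[where f="(+)"] sum.cong refl)
       simp
  also have "\<dots> = Sb m N + Tb m N"
    unfolding Sb_def Tb_def by (subst sum.lessThan_Suc_shift) (simp add: sum.distrib)
  finally show ?thesis .
qed

lemma Tb_Suc: "Tb (Suc m) (Suc N) = Tb (Suc m) N + Sb m (Suc N)"
proof -
  have "Tb (Suc m) (Suc N) = (\<Sum>i<Suc m. ((N+i+1) choose (2*i+1)) + ((N+i+1) choose (2*i)))"
    unfolding Tb_def
    by (intro sum.cong refl) simp
  also have "\<dots> = Tb (Suc m) N + Sb m (Suc N)"
    unfolding Tb_def Sb_def by (simp add: sum.distrib)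
  finally show ?thesis .
qed

lemma Sb_mono_Suc: "Sb m N \<le> Sb m (Suc N)" using Sb_Suc by simp

lemma Sb_mono: "N \<le> M \<Longrightarrow> Sb m N \<le> Sb m M"
  by (induction M rule: dec_induct) (auto intro: order_trans Sb_mono_Suc)

lemma Gc_one: "Gc m 1 = 1"
  by (induction m) auto

lemma Sb_ge1: "1 \<le> Sb m N"
  unfolding Sb_def by (subst sum.lessThan_Suc_shift) simp

lemma W_Suc: "(\<Sum>j<Suc N. (Suc N - j) * f j) = (\<Sum>j<N. (N - j) * f j) + (\<Sum>j<Suc N. f j :: nat)"
proof -
  have "(\<Sum>j<Suc N. (Suc N - j) * f j) = (\<Sum>j<Suc N. (N - j) * f j + f j)"
    by (intro sum.cong refl) (simp add: Suc_diff_le algebra_simps)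
  also have "\<dots> = (\<Sum>j<N. (N - j) * f j) + (\<Sum>j<Suc N. f j)"
    by (simp add: sum.distrib)
  finally show ?thesis .
qed

lemma Gc_le_Sb: "Gc m N \<le> Sb m N"
proof (induction m arbitrary: N)
  case 0 then show ?case by (simp add: Sb_def)
next
  case (Suc m)
  define f where "f j = Gc m (max 1 (j - 1))" for j
  have fle: "f (Suc N) \<le> Sb m (Suc N)" for N
  proof (cases N)
    case 0 then show ?thesis using Gc_one[of m] Sb_ge1[of m "Suc 0"] by (simp add: f_def)
  next
    case (Suc k) then show ?thesis unfolding f_def using Suc.IH[of N] Sb_mono_Suc[of m N] by simp
  qed
  have "(\<Sum>j<N. (N - j) * f j) \<le> Sb (Suc m) N \<and> (\<Sum>j<Suc N. f j) \<le> Tb (Suc m) N"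
  proof (induction N)
    case 0
    have "1 \<le> Tb (Suc m) 0" unfolding Tb_def by (subst sum.lessThan_Suc_shift) simp
    then show ?case using Gc_one[of m] by (simp add: f_def)
  next
    case (Suc N)
    have "(\<Sum>j<Suc N. (Suc N - j) * f j) \<le> Sb (Suc m) (Suc N)"
      unfolding W_Suc Sb_Suc using Suc by simp
    moreover have "(\<Sum>j<Suc (Suc N). f j) \<le> Tb (Suc m) (Suc N)"
      unfolding Tb_Suc using Suc fle[of N] by simp
    ultimately show ?case by simp
  qed
  then show ?case by (simp add: f_def)
qed

lemma binom_step: "Suc k * (n choose Suc k) = (n - k) * (n choose k)"
  using binomial_absorption[of k n] binomial_absorb_comp[of n k] by simp

lemma aux_mult: "(a::real) * b * X = c * Y \<Longrightarrow> X * (a * b * F) = Y * F * c"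
  by (simp add: algebra_simps)

lemma binom_amgm:
  assumes "i \<le> N"
  shows "real ((N+i) choose (2*i)) * fact (2*i) \<le> (real N + 1/2) ^ (2*i)"
  using assms
proof (induction i)
  case 0 then show ?case by simp
next
  case (Suc i)
  have e1: "(2*i+2) * ((N+i+1) choose (2*i+2)) = (N+i+1) * ((N+i) choose (2*i+1))"
    using Suc_times_binomial[of "2*i+1" "N+i"] by simp
  have e2: "(2*i+1) * ((N+i) choose (2*i+1)) = (N - i) * ((N+i) choose (2*i))"
    using binom_step[of "2*i" "N+i"] by simp
  have eqs: "N + Suc i = N+i+1" "2 * Suc i = 2*i+2" by simp_all
  have e: "real ((N+i+1) choose (2*i+2)) * fact (2*i+2)
        = real ((N+i) choose (2*i)) * fact (2*i) * (real (N+i+1) * real (N-i))"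
  proof -
    have F: "fact (2*i+2) = (real (2*i+2) * real (2*i+1)) * (fact (2*i) :: real)"
      by (simp add: fact_Suc del: of_nat_Suc)
    have H: "real (2*i+2) * real (2*i+1) * real ((N+i+1) choose (2*i+2))
       = real (N+i+1) * real (N - i) * real ((N+i) choose (2*i))"
    proof -
      have "(2*i+2) * (2*i+1) * ((N+i+1) choose (2*i+2)) = (N+i+1) * ((2*i+1) * ((N+i) choose (2*i+1)))"
      proof -
        define X where "X = (N+i+1) choose (2*i+2)"
        define Y where "Y = (N+i) choose (2*i+1)"
        have e1': "(2*i+2) * X = (N+i+1) * Y" using e1 unfolding X_def Y_def .
        have "(2*i+2) * (2*i+1) * X = (2*i+1) * ((2*i+2) * X)" by (simp only: ac_simps)
        also have "\<dots> = (2*i+1) * ((N+i+1) * Y)" by (simp only: e1')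
        also have "\<dots> = (N+i+1) * ((2*i+1) * Y)" by (simp only: ac_simps)
        finally show ?thesis unfolding X_def Y_def .
      qed
      also have "\<dots> = (N+i+1) * (N-i) * ((N+i) choose (2*i))" using e2 by (simp only:)
      finally show ?thesis unfolding of_nat_mult[symmetric] by (simp only: ac_simps)
    qed
    show ?thesis unfolding F by (rule aux_mult[OF H])
  qed
  have q: "real (N+i+1) * real (N-i) \<le> (real N + 1/2)^2"
  proof -
    have "real (N - i) = real N - real i" using Suc.prems by simp
    then show ?thesis by (simp add: power2_eq_square algebra_simps)
  qed
  have "real ((N+i+1) choose (2*i+2)) * fact (2*i+2) \<le> (real N + 1/2) ^ (2*i) * (real N + 1/2)^2"
    unfolding e
    by (intro mult_mono Suc.IH q) (use Suc.prems in auto)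
  also have "\<dots> = (real N + 1/2) ^ (2 * Suc i)" by (simp add: power_add[symmetric])
  finally show ?case unfolding eqs .
qed

lemma fact_le_fact_pow:
  assumes "m \<le> n" shows "(fact n :: real) \<le> fact m * real n ^ (n - m)"
  using assms
proof (induction n rule: dec_induct)
  case base then show ?case by simp
next
  case (step n)
  have "(fact (Suc n) :: real) = real (Suc n) * fact n" by simp
  also have "\<dots> \<le> real (Suc n) * (fact m * real n ^ (n - m))"
    by (intro mult_left_mono step.IH) auto
  also have "\<dots> \<le> real (Suc n) * (fact m * real (Suc n) ^ (n - m))"
    by (intro mult_left_mono power_mono) auto
  also have "\<dots> = fact m * real (Suc n) ^ (Suc n - m)"
    using step.hyps by (simp add: Suc_diff_le)
  finally show ?case .
qed

lemma central_binom_Suc: "(d+1) * ((2*d+2) choose (d+1)) = 2*(2*d+1) * ((2*d) choose d)"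
proof -
  define A where "A = (2*d+2) choose (d+1)"
  define B where "B = (2*d+1) choose d"
  define C where "C = (2*d) choose d"
  have a: "(d+1) * A = (2*d+2) * B"
    using Suc_times_binomial[of d "2*d+1"] unfolding A_def B_def by (simp del: binomial_Suc_Suc)
  have b: "(d+1) * B = (2*d+1) * C"
    using binomial_absorb_comp[of "2*d+1" d] unfolding B_def C_def by (simp del: binomial_Suc_Suc)
  have "(d+1) * A = (d+1) * (2 * B)" using a by (simp del: binomial_Suc_Suc add: algebra_simps)
  then have "A = 2 * B" by (simp only: mult_cancel1) simp
  then show ?thesis using b unfolding A_def[symmetric] C_def[symmetric] by (simp del: binomial_Suc_Suc add: algebra_simps)
qed

lemma binom_vals: "(6::nat) choose 3 = 20" "(8::nat) choose 4 = 70"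
proof -
  have "real (8 choose 4) = fact 8 / (fact 4 * fact (8 - 4))" by (rule binomial_fact) simp
  also have "\<dots> = 70" by (simp add: fact_numeral)
  finally show "(8::nat) choose 4 = 70" by simp
  have "real (6 choose 3) = fact 6 / (fact 3 * fact (6 - 3))" by (rule binomial_fact) simp
  also have "\<dots> = 20" by (simp add: fact_numeral)
  finally show "(6::nat) choose 3 = 20" by simp
qed

lemma central_binom_big: "d \<ge> 4 \<Longrightarrow> (d+1) * 16^d \<le> 9^d * ((2*d) choose d)"
proof (induction d rule: dec_induct)
  case base then show ?case by (simp add: binom_vals)
next
  case (step d)
  have "(Suc d + 1) * 16 ^ Suc d * (d+1) = 16 * (d+2) * ((d+1) * 16^d)" by (simp add: algebra_simps)
  also have "\<dots> \<le> 16 * (d+2) * (9^d * ((2*d) choose d))"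
    using step.IH by simp
  also have "\<dots> \<le> 9 * (2*(2*d+1)) * (9^d * ((2*d) choose d))"
    using step.hyps by (intro mult_right_mono) auto
  also have "\<dots> = 9^Suc d * ((d+1) * ((2*d+2) choose (d+1)))"
    unfolding central_binom_Suc by (simp add: algebra_simps)
  also have "\<dots> = 9 ^ Suc d * ((2 * Suc d) choose Suc d) * (d+1)"
    by (simp del: binomial_Suc_Suc add: algebra_simps)
  finally show ?case by (simp only: mult_le_cancel2)
qed

lemma ratio_bound:
  assumes d3: "d \<ge> 3" and x: "x \<ge> 2 * real d + 1/2"
  shows "real (d+1) / real ((2*d) choose d) \<le> ((x - real d/2) / x) ^ (2*d)"
proof (cases "d = 3")
  case True
  have C: "(6::nat) choose 3 = 20" by (rule binom_vals)
  have x65: "x \<ge> 13/2" using x True by simp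
  have r: "(x - 3/2) / x \<ge> 10/13" using x65 by (simp add: field_simps)
  have "real (d+1) / real ((2*d) choose d) = 1/5" using True C by simp
  also have "\<dots> \<le> (10/13) ^ 6" by (simp add: power_divide)
  also have "\<dots> \<le> ((x - 3/2)/x) ^ 6" by (intro power_mono r) simp
  finally show ?thesis using True by simp
next
  case False
  then have d4: "d \<ge> 4" using d3 by simp
  have Cpos: "real ((2*d) choose d) > 0" by simp
  have "real ((d+1) * 16^d) \<le> real (9^d * ((2*d) choose d))"
    using central_binom_big[OF d4] by (simp only: of_nat_le_iff)
  then have "real (d+1) * 16^d \<le> 9^d * real ((2*d) choose d)" by (simp add: algebra_simps)
  then have "real (d+1) / real ((2*d) choose d) \<le> 9^d / 16^d"
    using Cpos by (simp add: field_simps)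
  also have "(9::real)^d / 16^d = (3/4) ^ (2*d)"
    by (simp add: power_mult power_divide)
  also have "\<dots> \<le> ((x - real d/2) / x) ^ (2*d)"
  proof (intro power_mono)
    have "x > 0" using x by simp
    then show "3/4 \<le> (x - real d/2) / x" using x by (simp add: field_simps)
  qed simp
  finally show ?thesis .
qed

lemma term_bound:
  assumes "i \<le> d" "2*d \<le> N"
  shows "real ((N+i) choose (2*i)) * (fact d)^2 \<le> (real N + 1/2)^(2*d) / real ((2*d) choose d)"
proof -
  define x where "x = real N + 1/2"
  define C where "C = real ((2*d) choose d)"
  have Cpos: "C > 0" unfolding C_def by simp
  have x2d: "2 * real d \<le> x" using assms unfolding x_def by simp
  have fd: "(fact d)^2 * C = (fact (2*d) :: real)"
    using binomial_fact_lemma[of d "2*d"] unfolding C_def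
    by (simp add: power2_eq_square mult_2 flip: of_nat_mult) (metis of_nat_fact of_nat_mult)
  have b1: "real ((N+i) choose (2*i)) * fact (2*i) \<le> x ^ (2*i)"
    using binom_amgm[of i N] assms unfolding x_def by simp
  have b2: "(fact (2*d) :: real) \<le> fact (2*i) * real (2*d) ^ (2*d - 2*i)"
    using fact_le_fact_pow[of "2*i" "2*d"] assms by simp
  have b3: "real (2*d) ^ (2*d - 2*i) \<le> x ^ (2*d - 2*i)"
    using x2d by (intro power_mono) auto
  have "real ((N+i) choose (2*i)) * (fact d)^2 * C = real ((N+i) choose (2*i)) * fact (2*d)"
    using fd by (simp add: algebra_simps)
  also have "\<dots> \<le> real ((N+i) choose (2*i)) * (fact (2*i) * x ^ (2*d - 2*i))"
    using b2 b3 by (intro mult_left_mono) (auto intro: order_trans mult_left_mono)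
  also have "\<dots> = (real ((N+i) choose (2*i)) * fact (2*i)) * x ^ (2*d - 2*i)" by simp
  also have "\<dots> \<le> x ^ (2*i) * x ^ (2*d - 2*i)"
    using b1 x2d by (intro mult_right_mono) auto
  also have "\<dots> = x ^ (2*d)" using assms by (simp flip: power_add)
  finally show ?thesis using Cpos unfolding x_def[symmetric] C_def[symmetric]
    by (simp add: field_simps)
qed

lemma Sb_final:
  assumes d3: "d \<ge> 3" and N: "2*d \<le> N"
  shows "real (Sb d N) * (fact d)^2 \<le> (real N + 1/2 - real d/2) ^ (2*d)"
proof -
  define x where "x = real N + 1/2"
  define C where "C = real ((2*d) choose d)"
  have Cpos: "C > 0" unfolding C_def by simp
  have xpos: "x > 0" unfolding x_def by simp
  have "real (Sb d N) * (fact d)^2 = (\<Sum>i<Suc d. real ((N+i) choose (2*i)) * (fact d)^2)"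
    unfolding Sb_def of_nat_sum by (rule sum_distrib_right)
  also have "\<dots> \<le> (\<Sum>i<Suc d. x^(2*d) / C)"
    unfolding x_def C_def by (intro sum_mono term_bound) (use N in auto)
  also have "\<dots> = real (d+1) / C * x^(2*d)" by simp
  also have "\<dots> \<le> ((x - real d/2) / x) ^ (2*d) * x^(2*d)"
    unfolding C_def by (intro mult_right_mono ratio_bound d3) (use N in \<open>auto simp: x_def\<close>)
  also have "\<dots> = (x - real d/2) ^ (2*d)"
    using xpos by (simp add: power_divide)
  finally show ?thesis unfolding x_def .
qed

fun gr :: "nat \<Rightarrow> (nat \<times> nat) list \<Rightarrow> nat list" where
  "gr N [] = []"
| "gr N (p # r) = N # gr (max 1 (snd p - fst p - 1)) r"

fun Dset :: "nat \<Rightarrow> nat \<Rightarrow> (nat \<times> nat) list set" where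
  "Dset N 0 = {[]}"
| "Dset N (Suc m) = (\<Union>j<N. \<Union>a<N-j. (\<lambda>r. (a, a+j) # r) ` Dset (max 1 (j-1)) m)"

lemma Dset_card: "finite (Dset N m) \<and> card (Dset N m) \<le> Gc m N"
proof (induction m arbitrary: N)
  case 0 then show ?case by simp
next
  case (Suc m)
  have fin: "finite (Dset N (Suc m))" using Suc by simp
  have "card (Dset N (Suc m)) \<le> (\<Sum>j<N. card (\<Union>a<N-j. (\<lambda>r. (a, a+j) # r) ` Dset (max 1 (j-1)) m))"
    by simp (rule card_UN_le, simp)
  also have "\<dots> \<le> (\<Sum>j<N. \<Sum>a<N-j. card ((\<lambda>r. (a, a+j) # r) ` Dset (max 1 (j-1)) m))"
    by (intro sum_mono card_UN_le) simp
  also have "\<dots> \<le> (\<Sum>j<N. \<Sum>a<N-j. Gc m (max 1 (j-1)))"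
    by (intro sum_mono order_trans[OF card_image_le]) (use Suc in auto)
  also have "\<dots> = Gc (Suc m) N" by simp
  finally show ?case using fin by simp
qed

lemma gr_length[simp]: "length (gr N ds) = length ds"
  by (induction ds arbitrary: N) auto

lemma gr_0: "ds \<noteq> [] \<Longrightarrow> gr N ds ! 0 = N"
  by (cases ds) auto

lemma gr_Suc: "Suc k < length ds \<Longrightarrow> gr N ds ! Suc k = max 1 (snd (ds!k) - fst (ds!k) - 1)"
proof (induction ds arbitrary: N k)
  case Nil then show ?case by simp
next
  case (Cons p r)
  show ?case
  proof (cases k)
    case 0 then show ?thesis using Cons by (cases r) auto
  next
    case (Suc k') then show ?thesis using Cons by auto
  qed
qed

lemma gr_pos: "N \<ge> 1 \<Longrightarrow> k < length ds \<Longrightarrow> gr N ds ! k \<ge> 1"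
  by (cases k) (auto simp: gr_0 gr_Suc)

lemma Dset_char:
  "ds \<in> Dset N m \<longleftrightarrow> length ds = m \<and> (\<forall>k<m. fst (ds!k) \<le> snd (ds!k) \<and> snd (ds!k) < gr N ds ! k)"
proof (induction m arbitrary: N ds)
  case 0 then show ?case by auto
next
  case (Suc m)
  show ?case
  proof (cases ds)
    case Nil then show ?thesis by auto
  next
    case (Cons p r)
    obtain a b where p: "p = (a,b)" by force
    have "ds \<in> Dset N (Suc m) \<longleftrightarrow> a \<le> b \<and> b < N \<and> r \<in> Dset (max 1 (b - a - 1)) m"
    proof
      assume "ds \<in> Dset N (Suc m)"
      then obtain j a' r' where "j < N" "a' < N - j" "r' \<in> Dset (max 1 (j-1)) m" "ds = (a', a'+j) # r'"
        by auto
      then show "a \<le> b \<and> b < N \<and> r \<in> Dset (max 1 (b - a - 1)) m" using Cons p by auto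
    next
      assume H: "a \<le> b \<and> b < N \<and> r \<in> Dset (max 1 (b - a - 1)) m"
      then have 1: "b - a \<in> {..<N}" "a \<in> {..<N - (b - a)}" "ds = (\<lambda>r. (a, a + (b-a)) # r) r"
        and 2: "r \<in> Dset (max 1 ((b-a) - 1)) m" using Cons p by auto
      show "ds \<in> Dset N (Suc m)" unfolding Dset.simps
        using 1 2 by blast
    qed
    also have "\<dots> \<longleftrightarrow> length ds = Suc m \<and> (\<forall>k<Suc m. fst (ds!k) \<le> snd (ds!k) \<and> snd (ds!k) < gr N ds ! k)"
      unfolding Suc.IH Cons p by (auto simp: All_less_Suc2)
    finally show ?thesis .
  qed
qed

fun bld :: "(nat \<Rightarrow> real) \<Rightarrow> (nat \<Rightarrow> real) \<Rightarrow> nat \<Rightarrow> nat \<Rightarrow> nat \<Rightarrow> (nat \<times> nat) list" where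
  "bld Y Z 0 k N = []"
| "bld Y Z (Suc m) k N = (nat \<lfloor>Y k * real N\<rfloor>, nat \<lfloor>Z k * real N\<rfloor>) #
       bld Y Z m (Suc k) (max 1 (nat \<lfloor>Z k * real N\<rfloor> - nat \<lfloor>Y k * real N\<rfloor> - 1))"

lemma bld_length[simp]: "length (bld Y Z m k N) = m"
  by (induction m arbitrary: k N) auto

lemma bld_nth: "j < m \<Longrightarrow> bld Y Z m k N ! j =
   (nat \<lfloor>Y (k+j) * real (gr N (bld Y Z m k N) ! j)\<rfloor>, nat \<lfloor>Z (k+j) * real (gr N (bld Y Z m k N) ! j)\<rfloor>)"
proof (induction m arbitrary: k N j)
  case 0 then show ?case by simp
next
  case (Suc m)
  show ?case
  proof (cases j)
    case 0 then show ?thesis by simp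
  next
    case (Suc j') then show ?thesis using Suc.IH[of j'] Suc.prems by simp
  qed
qed

lemma box_co_sets[measurable]: "box_co (y::real^'n) z \<in> sets lborel"
proof -
  have "box_co y z = (\<Inter>i. {x. y$i \<le> x$i}) \<inter> (\<Inter>i. {x::real^'n. x$i < z$i})"
    by (auto simp: box_co_def)
  moreover have "closed {x::real^'n. y$i \<le> x$i}" for i
    by (intro closed_Collect_le continuous_intros)
  moreover have "open {x::real^'n. x$i < z$i}" for i
    by (intro open_Collect_less continuous_intros)
  ultimately show ?thesis by (auto intro!: sets.Int sets.countable_INT borel_closed borel_open)
qed

lemma unit_cube_box: "unit_cube = box_co 0 1"
  by (simp add: unit_cube_def box_co_def)

lemma unit_cube_sets[measurable]: "unit_cube \<in> sets lborel"
  unfolding unit_cube_box by (rule box_co_sets)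

lemma measure_cbox_le:
  fixes p q :: "real^'n"
  shows "measure lborel (cbox p q) \<le> (\<Prod>i\<in>UNIV. max 0 (q$i - p$i))"
proof (cases "\<forall>b\<in>Basis. p \<bullet> b \<le> q \<bullet> b")
  case True
  have B: "(Basis :: (real^'n) set) = (\<lambda>i. axis i 1) ` UNIV"
    by (auto simp: Basis_vec_def)
  have inj: "inj (\<lambda>i::'n. axis i (1::real))" by (auto simp: inj_def axis_eq_axis)
  have "measure lborel (cbox p q) = (\<Prod>b\<in>Basis. (q - p) \<bullet> b)"
    using True by (simp add: measure_lborel_cbox_eq)
  also have "\<dots> = (\<Prod>i\<in>UNIV. (q - p) \<bullet> axis i 1)"
    unfolding B by (subst prod.reindex[OF inj]) simp
  also have "\<dots> = (\<Prod>i\<in>UNIV. q$i - p$i)" by (simp add: inner_axis)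
  also have "\<dots> \<le> (\<Prod>i\<in>UNIV. max 0 (q$i - p$i))"
  proof (intro prod_mono conjI)
    fix i
    have "axis i 1 \<in> (Basis :: (real^'n) set)" by (auto simp: Basis_vec_def)
    then have "p$i \<le> q$i" using True by (simp add: cart_eq_inner_axis)
    then show "0 \<le> q$i - p$i" by simp
  qed auto
  finally show ?thesis .
next
  case False
  then have "measure lborel (cbox p q) = 0" by (auto simp: measure_lborel_cbox_eq)
  then show ?thesis by (simp add: prod_nonneg)
qed

lemma prod_split_bound:
  fixes w L :: "nat \<Rightarrow> real"
  assumes k: "k < d" and w0: "\<And>j. j < d \<Longrightarrow> 0 \<le> w j"
    and wL: "\<And>j. j < k \<Longrightarrow> w j \<le> L j" and wk: "w k \<le> c"
    and w1: "\<And>j. k < j \<Longrightarrow> j < d \<Longrightarrow> w j \<le> 1"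
  shows "(\<Prod>j<d. w j) \<le> (\<Prod>j<k. L j) * c"
proof -
  have split: "{..<d} = {..<k} \<union> insert k {Suc k..<d}" using k by auto
  have "(\<Prod>j<d. w j) = (\<Prod>j<k. w j) * (w k * (\<Prod>j\<in>{Suc k..<d}. w j))"
    unfolding split by (subst prod.union_disjoint) auto
  also have "\<dots> \<le> (\<Prod>j<k. L j) * (c * 1)"
  proof (intro mult_mono prod_mono conjI)
    show "0 \<le> w j" "w j \<le> L j" if "j \<in> {..<k}" for j using that w0 wL k by auto
    show "w k \<le> c" by (rule wk)
    show "(\<Prod>j\<in>{Suc k..<d}. w j) \<le> 1" by (intro prod_le_1) (use w0 w1 in auto)
    show "0 \<le> c" using w0[OF k] wk by simp
    show "0 \<le> w k * (\<Prod>j\<in>{Suc k..<d}. w j)" using w0 k by (auto intro!: mult_nonneg_nonneg prod_nonneg)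
    show "0 \<le> (\<Prod>j\<in>{Suc k..<d}. w j)" using w0 by (auto intro!: prod_nonneg)
    show "0 \<le> (\<Prod>j<k. L j)"
    proof (intro prod_nonneg)
      fix j assume "j \<in> {..<k}"
      then have "j < k" "j < d" using k by auto
      then show "0 \<le> L j" using w0 wL by (meson order_trans)
    qed
  qed
  finally show ?thesis by simp
qed

definition Lw :: "nat \<Rightarrow> (nat \<times> nat) list \<Rightarrow> nat \<Rightarrow> real" where
  "Lw N0 ds k = real (snd (ds!k) - fst (ds!k) - 1) / real (gr N0 ds ! k)"

lemma P_bound:
  assumes ds: "ds \<in> Dset N0 d" and N0: "N0 \<ge> 1" and k: "k < d"
  shows "(\<Prod>j<k. Lw N0 ds j) \<le> real (gr N0 ds ! k) / real N0"
  using k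
proof (induction k)
  case 0
  have "d \<noteq> 0" using 0 by simp
  then have "ds \<noteq> []" using ds by (auto simp: Dset_char)
  then show ?case using N0 by (simp add: gr_0)
next
  case (Suc k)
  have len: "length ds = d" using ds by (simp add: Dset_char)
  have G: "real (gr N0 ds ! k) \<ge> 1" using gr_pos[OF N0, of k ds] Suc.prems len by simp
  have "(\<Prod>j<Suc k. Lw N0 ds j) = (\<Prod>j<k. Lw N0 ds j) * Lw N0 ds k" by simp
  also have "\<dots> \<le> real (gr N0 ds ! k) / real N0 * Lw N0 ds k"
    using Suc by (intro mult_right_mono) (auto simp: Lw_def)
  also have "\<dots> = real (snd (ds!k) - fst (ds!k) - 1) / real N0"
    using G by (simp add: Lw_def)
  also have "\<dots> \<le> real (gr N0 ds ! Suc k) / real N0"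
    using gr_Suc[of k ds N0] Suc.prems len by (intro divide_right_mono) auto
  finally show ?case .
qed

locale coords =
  fixes \<sigma> :: "nat \<Rightarrow> 'n::finite"
  assumes bij: "bij_betw \<sigma> {..<CARD('n)} UNIV"
begin

definition \<kappa> :: "'n \<Rightarrow> nat" where "\<kappa> = inv_into {..<CARD('n)} \<sigma>"

lemma \<kappa>_lt: "\<kappa> i < CARD('n)"
proof -
  have "i \<in> \<sigma> ` {..<CARD('n)}" using bij by (simp add: bij_betw_def)
  then have "inv_into {..<CARD('n)} \<sigma> i \<in> {..<CARD('n)}" by (rule inv_into_into)
  then show ?thesis unfolding \<kappa>_def by simp
qed

lemma \<sigma>_\<kappa>: "\<sigma> (\<kappa> i) = i"
  unfolding \<kappa>_def by (rule bij_betw_inv_into_right[OF bij UNIV_I])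

lemma \<kappa>_\<sigma>: "k < CARD('n) \<Longrightarrow> \<kappa> (\<sigma> k) = k"
  unfolding \<kappa>_def by (rule bij_betw_inv_into_left[OF bij]) simp

lemma \<kappa>_inj: assumes "\<kappa> i = \<kappa> j" shows "i = j"
proof -
  have "\<sigma> (\<kappa> i) = \<sigma> (\<kappa> j)" using assms by simp
  then show ?thesis by (simp only: \<sigma>_\<kappa>)
qed

lemma prod_\<kappa>: "(\<Prod>i\<in>UNIV. f (\<kappa> i)) = (\<Prod>k<CARD('n). f k)"
proof -
  have "(\<Prod>k<CARD('n). f (\<kappa> (\<sigma> k))) = (\<Prod>i\<in>UNIV. f (\<kappa> i))"
    by (rule prod.reindex_bij_betw[OF bij])
  moreover have "(\<Prod>k<CARD('n). f (\<kappa> (\<sigma> k))) = (\<Prod>k<CARD('n). f k)"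
    by (intro prod.cong refl) (simp add: \<kappa>_\<sigma>)
  ultimately show ?thesis by simp
qed

definition aa :: "(nat \<times> nat) list \<Rightarrow> nat \<Rightarrow> real" where "aa ds k = real (fst (ds!k))"
definition bb :: "(nat \<times> nat) list \<Rightarrow> nat \<Rightarrow> real" where "bb ds k = real (snd (ds!k))"
definition gg :: "nat \<Rightarrow> (nat \<times> nat) list \<Rightarrow> nat \<Rightarrow> real" where "gg N0 ds k = real (gr N0 ds ! k)"

definition Lbox :: "nat \<Rightarrow> (nat \<times> nat) list \<Rightarrow> (real^'n) set" where
  "Lbox N0 ds = box_co (\<chi> i. (aa ds (\<kappa> i) + 1) / gg N0 ds (\<kappa> i)) (\<chi> i. bb ds (\<kappa> i) / gg N0 ds (\<kappa> i))"
definition Ubox :: "nat \<Rightarrow> (nat \<times> nat) list \<Rightarrow> (real^'n) set" where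
  "Ubox N0 ds = box_co (\<chi> i. aa ds (\<kappa> i) / gg N0 ds (\<kappa> i)) (\<chi> i. (bb ds (\<kappa> i) + 1) / gg N0 ds (\<kappa> i))"

lemma L_sub_U: "Lbox N0 ds \<subseteq> Ubox N0 ds"
proof
  fix x assume "x \<in> Lbox N0 ds"
  then have H: "(aa ds (\<kappa> i) + 1) / gg N0 ds (\<kappa> i) \<le> x$i \<and> x$i < bb ds (\<kappa> i) / gg N0 ds (\<kappa> i)" for i
    by (auto simp: Lbox_def box_co_def)
  have g: "gg N0 ds k \<ge> 0" for k by (simp add: gg_def)
  have "aa ds (\<kappa> i) / gg N0 ds (\<kappa> i) \<le> x$i \<and> x$i < (bb ds (\<kappa> i) + 1) / gg N0 ds (\<kappa> i)" for i
  proof -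
    have "aa ds (\<kappa> i) / gg N0 ds (\<kappa> i) \<le> (aa ds (\<kappa> i) + 1) / gg N0 ds (\<kappa> i)"
      using g by (intro divide_right_mono) auto
    moreover have "bb ds (\<kappa> i) / gg N0 ds (\<kappa> i) \<le> (bb ds (\<kappa> i) + 1) / gg N0 ds (\<kappa> i)"
      using g by (intro divide_right_mono) auto
    ultimately show ?thesis using H[of i] by linarith
  qed
  then show "x \<in> Ubox N0 ds" by (simp add: Ubox_def box_co_def)
qed

definition C1 :: "nat \<Rightarrow> (nat \<times> nat) list \<Rightarrow> nat \<Rightarrow> (real^'n) set" where
  "C1 N0 ds k = cbox
     (\<chi> i. if \<kappa> i < k then (aa ds (\<kappa> i) + 1) / gg N0 ds (\<kappa> i) else aa ds (\<kappa> i) / gg N0 ds (\<kappa> i))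
     (\<chi> i. if \<kappa> i < k then bb ds (\<kappa> i) / gg N0 ds (\<kappa> i)
           else if \<kappa> i = k then (aa ds (\<kappa> i) + 1) / gg N0 ds (\<kappa> i)
           else (bb ds (\<kappa> i) + 1) / gg N0 ds (\<kappa> i))"

definition C2 :: "nat \<Rightarrow> (nat \<times> nat) list \<Rightarrow> nat \<Rightarrow> (real^'n) set" where
  "C2 N0 ds k = cbox
     (\<chi> i. if \<kappa> i < k then (aa ds (\<kappa> i) + 1) / gg N0 ds (\<kappa> i)
           else if \<kappa> i = k then bb ds (\<kappa> i) / gg N0 ds (\<kappa> i)
           else aa ds (\<kappa> i) / gg N0 ds (\<kappa> i))
     (\<chi> i. if \<kappa> i < k then bb ds (\<kappa> i) / gg N0 ds (\<kappa> i) else (bb ds (\<kappa> i) + 1) / gg N0 ds (\<kappa> i))"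

lemma cover: "Ubox N0 ds - Lbox N0 ds \<subseteq> (\<Union>k<CARD('n). C1 N0 ds k \<union> C2 N0 ds k)"
proof
  fix x assume x: "x \<in> Ubox N0 ds - Lbox N0 ds"
  define lo where "lo i = (aa ds (\<kappa> i) + 1) / gg N0 ds (\<kappa> i)" for i
  define hi where "hi i = bb ds (\<kappa> i) / gg N0 ds (\<kappa> i)" for i
  define ulo where "ulo i = aa ds (\<kappa> i) / gg N0 ds (\<kappa> i)" for i
  define uhi where "uhi i = (bb ds (\<kappa> i) + 1) / gg N0 ds (\<kappa> i)" for i
  have U: "ulo i \<le> x$i \<and> x$i < uhi i" for i
    using x by (auto simp: Ubox_def box_co_def ulo_def uhi_def)
  have "\<exists>i. \<not> (lo i \<le> x$i \<and> x$i < hi i)"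
    using x by (auto simp: Lbox_def box_co_def lo_def hi_def)
  then have ex: "\<exists>k. \<exists>i. \<kappa> i = k \<and> \<not> (lo i \<le> x$i \<and> x$i < hi i)" by blast
  define k where "k = (LEAST k. \<exists>i. \<kappa> i = k \<and> \<not> (lo i \<le> x$i \<and> x$i < hi i))"
  obtain i where i: "\<kappa> i = k" "\<not> (lo i \<le> x$i \<and> x$i < hi i)"
    using LeastI_ex[OF ex] unfolding k_def by blast
  have before: "lo j \<le> x$j \<and> x$j < hi j" if "\<kappa> j < k" for j
  proof (rule ccontr)
    assume "\<not> (lo j \<le> x$j \<and> x$j < hi j)"
    then have "\<exists>i. \<kappa> i = \<kappa> j \<and> \<not> (lo i \<le> x$i \<and> x$i < hi i)" by blast
    then have "k \<le> \<kappa> j" unfolding k_def by (rule Least_le)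
    then show False using that by simp
  qed
  have klt: "k < CARD('n)" using i(1) \<kappa>_lt[of i] by simp
  have same: "\<kappa> j = k \<Longrightarrow> j = i" for j using i(1) \<kappa>_inj[of j i] by simp
  show "x \<in> (\<Union>k<CARD('n). C1 N0 ds k \<union> C2 N0 ds k)"
  proof (cases "x$i < lo i")
    case True
    have "x \<in> C1 N0 ds k"
      unfolding C1_def mem_box_cart(2)
    proof (intro allI)
      fix j
      consider "\<kappa> j < k" | "\<kappa> j = k" | "\<kappa> j > k" by (rule linorder_cases)
      then show "(\<chi> i. if \<kappa> i < k then (aa ds (\<kappa> i) + 1) / gg N0 ds (\<kappa> i) else aa ds (\<kappa> i) / gg N0 ds (\<kappa> i)) $ j \<le> x $ j \<and>
         x $ j \<le> (\<chi> i. if \<kappa> i < k then bb ds (\<kappa> i) / gg N0 ds (\<kappa> i)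
           else if \<kappa> i = k then (aa ds (\<kappa> i) + 1) / gg N0 ds (\<kappa> i)
           else (bb ds (\<kappa> i) + 1) / gg N0 ds (\<kappa> i)) $ j"
      proof cases
        case 1 then show ?thesis using before[OF 1] by (simp add: lo_def hi_def)
      next
        case 2 then show ?thesis using same[OF 2] True U[of i] by (simp add: lo_def ulo_def)
      next
        case 3 then show ?thesis using U[of j] by (simp add: ulo_def uhi_def)
      qed
    qed
    then show ?thesis using klt by blast
  next
    case False
    then have F: "hi i \<le> x$i" using i(2) by linarith
    have "x \<in> C2 N0 ds k"
      unfolding C2_def mem_box_cart(2)
    proof (intro allI)
      fix j
      consider "\<kappa> j < k" | "\<kappa> j = k" | "\<kappa> j > k" by (rule linorder_cases)
      then show "(\<chi> i. if \<kappa> i < k then (aa ds (\<kappa> i) + 1) / gg N0 ds (\<kappa> i)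
           else if \<kappa> i = k then bb ds (\<kappa> i) / gg N0 ds (\<kappa> i)
           else aa ds (\<kappa> i) / gg N0 ds (\<kappa> i)) $ j \<le> x $ j \<and>
         x $ j \<le> (\<chi> i. if \<kappa> i < k then bb ds (\<kappa> i) / gg N0 ds (\<kappa> i) else (bb ds (\<kappa> i) + 1) / gg N0 ds (\<kappa> i)) $ j"
      proof cases
        case 1 then show ?thesis using before[OF 1] by (simp add: lo_def hi_def)
      next
        case 2 then show ?thesis using same[OF 2] F U[of i] by (simp add: hi_def uhi_def)
      next
        case 3 then show ?thesis using U[of j] by (simp add: ulo_def uhi_def)
      qed
    qed
    then show ?thesis using klt by blast
  qed
qed

end

lemma unit_cube_sub: "unit_cube \<subseteq> cbox (0::real^'n) 1"
  by (auto simp: unit_cube_def mem_box_cart less_imp_le)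

lemma L1_ind:
  assumes "S \<in> sets lborel"
  shows "L1_cube (indicator S :: real^'n \<Rightarrow> real)"
proof -
  have e: "(\<lambda>x. indicator unit_cube x *\<^sub>R indicator S x) = (indicator (unit_cube \<inter> S) :: real^'n \<Rightarrow> real)"
    by (auto simp: fun_eq_iff split: split_indicator)
  have "emeasure lborel (unit_cube \<inter> S) \<le> emeasure lborel (cbox (0::real^'n) 1)"
    using unit_cube_sub by (intro emeasure_mono) auto
  also have "\<dots> < \<infinity>" by (rule emeasure_lborel_cbox_finite)
  finally have "emeasure lborel (unit_cube \<inter> S) < \<infinity>" .
  then show ?thesis
    unfolding L1_cube_def set_integrable_def e using assms
    by (subst integrable_indicator_iff) auto
qed

lemma L1_norm_diff:
  assumes "L \<subseteq> U"
  shows "L1_norm (\<lambda>x::real^'n. indicator U x - indicator L x) = measure lborel (unit_cube \<inter> (U - L))"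
proof -
  have e: "(\<lambda>x. indicator unit_cube x *\<^sub>R \<bar>indicator U x - indicator L x\<bar>) = (indicator (unit_cube \<inter> (U - L)) :: real^'n \<Rightarrow> real)"
    using assms by (auto simp: fun_eq_iff split: split_indicator)
  show ?thesis unfolding L1_norm_def set_lebesgue_integral_def e by simp
qed

context coords begin

lemma C_meas:
  assumes ds: "ds \<in> Dset N0 CARD('n)" and N0: "N0 \<ge> 1" and k: "k < CARD('n)"
  shows "measure lborel (C1 N0 ds k) \<le> 1 / real N0" "measure lborel (C2 N0 ds k) \<le> 1 / real N0"
proof -
  define d where "d = CARD('n)"
  have len: "length ds = d" using ds by (simp add: Dset_char d_def)
  have ab: "fst (ds!j) \<le> snd (ds!j) \<and> snd (ds!j) < gr N0 ds ! j" if "j < d" for j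
    using ds that by (simp add: Dset_char d_def)
  have gpos: "gg N0 ds j \<ge> 1" if "j < d" for j
    using gr_pos[OF N0, of j ds] that len by (simp add: gg_def)
  have Lwle: "max 0 (bb ds j / gg N0 ds j - (aa ds j + 1) / gg N0 ds j) \<le> Lw N0 ds j" if "j < d" for j
  proof (cases "snd (ds!j) \<ge> fst (ds!j) + 1")
    case True
    then have e: "real (snd (ds!j) - fst (ds!j) - 1) = bb ds j - aa ds j - 1"
      by (simp add: aa_def bb_def of_nat_diff)
    have "bb ds j / gg N0 ds j - (aa ds j + 1) / gg N0 ds j = (bb ds j - aa ds j - 1) / gg N0 ds j"
      by (simp add: diff_divide_distrib add_divide_distrib)
    also have "\<dots> = Lw N0 ds j" unfolding Lw_def e[symmetric] gg_def ..
    finally have "bb ds j / gg N0 ds j - (aa ds j + 1) / gg N0 ds j = Lw N0 ds j" .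
    moreover have "0 \<le> Lw N0 ds j" by (simp add: Lw_def)
    ultimately show ?thesis by simp
  next
    case False
    then have "bb ds j \<le> aa ds j" by (simp add: aa_def bb_def)
    then have "bb ds j / gg N0 ds j - (aa ds j + 1) / gg N0 ds j \<le> 0"
      using gpos[OF that] by (simp add: field_simps)
    moreover have "0 \<le> Lw N0 ds j" by (simp add: Lw_def)
    ultimately show ?thesis by simp
  qed
  have Ule: "max 0 ((bb ds j + 1) / gg N0 ds j - aa ds j / gg N0 ds j) \<le> 1" if "j < d" for j
  proof -
    have "bb ds j + 1 \<le> gg N0 ds j" using ab[OF that] by (simp add: bb_def gg_def)
    moreover have "aa ds j \<ge> 0" by (simp add: aa_def)
    ultimately have le: "bb ds j + 1 - aa ds j \<le> gg N0 ds j" by linarith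
    have "(bb ds j + 1) / gg N0 ds j - aa ds j / gg N0 ds j = (bb ds j + 1 - aa ds j) / gg N0 ds j"
      by (simp add: diff_divide_distrib)
    also have "\<dots> \<le> 1" using le gpos[OF that] by simp
    finally show ?thesis by simp
  qed
  have unit: "max 0 ((aa ds k + 1) / gg N0 ds k - aa ds k / gg N0 ds k) \<le> 1 / gg N0 ds k"
             "max 0 ((bb ds k + 1) / gg N0 ds k - bb ds k / gg N0 ds k) \<le> 1 / gg N0 ds k"
    using gpos[of k] k by (simp_all add: d_def field_simps)
  have P: "(\<Prod>j<k. Lw N0 ds j) * (1 / gg N0 ds k) \<le> 1 / real N0"
  proof -
    have "(\<Prod>j<k. Lw N0 ds j) \<le> gg N0 ds k / real N0"
      using P_bound[OF ds N0 k] by (simp add: gg_def)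
    then have "(\<Prod>j<k. Lw N0 ds j) * (1 / gg N0 ds k) \<le> gg N0 ds k / real N0 * (1 / gg N0 ds k)"
      using gpos[of k] k by (intro mult_right_mono) (auto simp: d_def)
    also have "\<dots> = 1 / real N0" using gpos[of k] k by (simp add: d_def)
    finally show ?thesis .
  qed
  have "measure lborel (C1 N0 ds k) \<le> (\<Prod>i\<in>UNIV. max 0
      ((if \<kappa> i < k then bb ds (\<kappa> i) / gg N0 ds (\<kappa> i)
           else if \<kappa> i = k then (aa ds (\<kappa> i) + 1) / gg N0 ds (\<kappa> i)
           else (bb ds (\<kappa> i) + 1) / gg N0 ds (\<kappa> i)) -
       (if \<kappa> i < k then (aa ds (\<kappa> i) + 1) / gg N0 ds (\<kappa> i) else aa ds (\<kappa> i) / gg N0 ds (\<kappa> i))))"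
    unfolding C1_def by (rule order_trans[OF measure_cbox_le], simp only: vec_lambda_beta order.refl)
  also have "\<dots> = (\<Prod>j<d. max 0
      ((if j < k then bb ds j / gg N0 ds j
           else if j = k then (aa ds j + 1) / gg N0 ds j
           else (bb ds j + 1) / gg N0 ds j) -
       (if j < k then (aa ds j + 1) / gg N0 ds j else aa ds j / gg N0 ds j)))"
    unfolding d_def by (rule prod_\<kappa>)
  also have "\<dots> \<le> (\<Prod>j<k. Lw N0 ds j) * (1 / gg N0 ds k)"
    by (rule prod_split_bound) (use k Lwle Ule unit in \<open>auto simp: d_def\<close>)
  also have "\<dots> \<le> 1 / real N0" by (rule P)
  finally show "measure lborel (C1 N0 ds k) \<le> 1 / real N0" .
  have "measure lborel (C2 N0 ds k) \<le> (\<Prod>i\<in>UNIV. max 0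
      ((if \<kappa> i < k then bb ds (\<kappa> i) / gg N0 ds (\<kappa> i) else (bb ds (\<kappa> i) + 1) / gg N0 ds (\<kappa> i)) -
       (if \<kappa> i < k then (aa ds (\<kappa> i) + 1) / gg N0 ds (\<kappa> i)
           else if \<kappa> i = k then bb ds (\<kappa> i) / gg N0 ds (\<kappa> i)
           else aa ds (\<kappa> i) / gg N0 ds (\<kappa> i))))"
    unfolding C2_def by (rule order_trans[OF measure_cbox_le], simp only: vec_lambda_beta order.refl)
  also have "\<dots> = (\<Prod>j<d. max 0
      ((if j < k then bb ds j / gg N0 ds j else (bb ds j + 1) / gg N0 ds j) -
       (if j < k then (aa ds j + 1) / gg N0 ds j
           else if j = k then bb ds j / gg N0 ds j
           else aa ds j / gg N0 ds j)))"
    unfolding d_def by (rule prod_\<kappa>)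
  also have "\<dots> \<le> (\<Prod>j<k. Lw N0 ds j) * (1 / gg N0 ds k)"
    by (rule prod_split_bound) (use k Lwle Ule unit in \<open>auto simp: d_def\<close>)
  also have "\<dots> \<le> 1 / real N0" by (rule P)
  finally show "measure lborel (C2 N0 ds k) \<le> 1 / real N0" .
qed

lemma err_bound:
  assumes ds: "ds \<in> Dset N0 CARD('n)" and N0: "N0 \<ge> 1"
  shows "L1_norm (\<lambda>x. indicator (Ubox N0 ds) x - indicator (Lbox N0 ds) x) \<le> 2 * real CARD('n) / real N0"
proof -
  let ?C = "\<lambda>k. C1 N0 ds k \<union> C2 N0 ds k"
  have fm: "(\<Union>k<CARD('n). ?C k) \<in> fmeasurable lborel"
    by (intro fmeasurable.finite_UN fmeasurable.Un) (auto simp: C1_def C2_def)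
  have "L1_norm (\<lambda>x. indicator (Ubox N0 ds) x - indicator (Lbox N0 ds) x) = measure lborel (unit_cube \<inter> (Ubox N0 ds - Lbox N0 ds))"
    by (rule L1_norm_diff[OF L_sub_U])
  also have "\<dots> \<le> measure lborel (\<Union>k<CARD('n). ?C k)"
    using cover by (intro measure_mono_fmeasurable fm) (auto simp: Ubox_def Lbox_def)
  also have "\<dots> \<le> (\<Sum>k<CARD('n). measure lborel (?C k))"
    by (rule measure_UNION_le) (auto simp: C1_def C2_def)
  also have "\<dots> \<le> (\<Sum>k<CARD('n). measure lborel (C1 N0 ds k) + measure lborel (C2 N0 ds k))"
    by (intro sum_mono measure_Un_le) (auto simp: C1_def C2_def)
  also have "\<dots> \<le> (\<Sum>k<CARD('n). 2 / real N0)"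
    using C_meas[OF ds N0] by (intro sum_mono) (auto intro: add_mono[where b="1/real N0" and d="1/real N0", simplified])
  also have "\<dots> = 2 * real CARD('n) / real N0" by simp
  finally show ?thesis .
qed

end

lemma floor_bounds:
  fixes t G :: real
  assumes "0 \<le> t" "G > 0"
  shows "real (nat \<lfloor>t*G\<rfloor>) / G \<le> t" "t < (real (nat \<lfloor>t*G\<rfloor>) + 1) / G"
proof -
  have nn: "0 \<le> t * G" using assms by simp
  then have e: "real (nat \<lfloor>t*G\<rfloor>) = of_int \<lfloor>t*G\<rfloor>" by simp
  have "of_int \<lfloor>t*G\<rfloor> \<le> t * G" by (rule of_int_floor_le)
  then show "real (nat \<lfloor>t*G\<rfloor>) / G \<le> t" unfolding e using assms by (simp add: divide_le_eq)
  have "t * G < of_int \<lfloor>t*G\<rfloor> + 1" by (rule real_of_int_floor_add_one_gt)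
  then show "t < (real (nat \<lfloor>t*G\<rfloor>) + 1) / G" unfolding e using assms by (simp add: less_divide_eq)
qed

context coords begin

lemma covers:
  assumes N0: "N0 \<ge> 1" and f: "f \<in> rect_class"
  shows "\<exists>ds\<in>Dset N0 CARD('n). f \<in> bracket (indicator (Lbox N0 ds)) (indicator (Ubox N0 ds))"
proof -
  define d where "d = CARD('n)"
  obtain y z where f: "f = indicator (box_co y z)" and y: "y \<in> unit_cube" and z: "z \<in> unit_cube"
    using f by (auto simp: rect_class_def)
  have L1f: "L1_cube f" unfolding f by (rule L1_ind[OF box_co_sets])
  show ?thesis
  proof (cases "\<exists>i. z$i \<le> y$i")
    case True
    then obtain i0 where i0: "z$i0 \<le> y$i0" by blast
    have empty: "box_co y z = {}"
    proof (rule equals0I)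
      fix x assume "x \<in> box_co y z"
      then have "y$i0 \<le> x$i0 \<and> x$i0 < z$i0" by (simp add: box_co_def)
      then show False using i0 by linarith
    qed
    define ds0 where "ds0 = replicate d (0::nat, 0::nat)"
    have ds0: "ds0 \<in> Dset N0 CARD('n)"
      unfolding Dset_char d_def[symmetric]
    proof (intro conjI allI impI)
      show "length ds0 = d" by (simp add: ds0_def)
      fix k assume k: "k < d"
      have "1 \<le> gr N0 ds0 ! k" using gr_pos[OF N0, of k ds0] k by (simp add: ds0_def)
      then show "fst (ds0 ! k) \<le> snd (ds0 ! k)" "snd (ds0 ! k) < gr N0 ds0 ! k"
        using k by (simp_all add: ds0_def)
    qed
    have "Lbox N0 ds0 = {}"
    proof (rule ccontr)
      assume "Lbox N0 ds0 \<noteq> {}"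
      then obtain x where "x \<in> Lbox N0 ds0" by blast
      then have "(aa ds0 (\<kappa> i0) + 1) / gg N0 ds0 (\<kappa> i0) \<le> x$i0 \<and> x$i0 < bb ds0 (\<kappa> i0) / gg N0 ds0 (\<kappa> i0)"
        by (auto simp: Lbox_def box_co_def)
      moreover have "aa ds0 (\<kappa> i0) = 0" "bb ds0 (\<kappa> i0) = 0"
        using \<kappa>_lt[of i0] by (simp_all add: aa_def bb_def ds0_def d_def)
      moreover have "1 / gg N0 ds0 (\<kappa> i0) \<ge> 0" by (simp add: gg_def)
      ultimately have "1 / gg N0 ds0 (\<kappa> i0) \<le> x$i0" "x$i0 < 0" "1 / gg N0 ds0 (\<kappa> i0) \<ge> 0"
        by simp_all
      then show False by linarith
    qed
    then have "f \<in> bracket (indicator (Lbox N0 ds0)) (indicator (Ubox N0 ds0))"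
      using L1f unfolding bracket_def f empty by simp
    then show ?thesis using ds0 by blast
  next
    case False
    then have yz: "y$i < z$i" for i by (meson not_le)
    define Y where "Y k = y $ \<sigma> k" for k
    define Z where "Z k = z $ \<sigma> k" for k
    define ds where "ds = bld Y Z d 0 N0"
    have len: "length ds = d" by (simp add: ds_def)
    define G where "G j = real (gr N0 ds ! j)" for j
    have Gpos: "G j \<ge> 1" if "j < d" for j using gr_pos[OF N0, of j ds] that len by (simp add: G_def)
    have nth: "ds ! j = (nat \<lfloor>Y j * G j\<rfloor>, nat \<lfloor>Z j * G j\<rfloor>)" if "j < d" for j
      using bld_nth[OF that, of Y Z 0 N0] unfolding ds_def[symmetric] G_def by simp
    have y0: "0 \<le> y$i" and z1: "z$i < 1" for i using y z by (auto simp: unit_cube_def)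
    have ds_in: "ds \<in> Dset N0 CARD('n)"
      unfolding Dset_char d_def[symmetric]
    proof (intro conjI allI impI len)
      fix j assume j: "j < d"
      have "Y j * G j \<le> Z j * G j" using yz[of "\<sigma> j"] Gpos[OF j] by (simp add: Y_def Z_def)
      then show "fst (ds ! j) \<le> snd (ds ! j)" unfolding nth[OF j] by (simp add: floor_mono nat_mono)
      have "Z j * G j < G j" using z1[of "\<sigma> j"] Gpos[OF j] by (simp add: Z_def)
      then have "\<lfloor>Z j * G j\<rfloor> < int (gr N0 ds ! j)" unfolding G_def by linarith
      then have "nat \<lfloor>Z j * G j\<rfloor> < nat (int (gr N0 ds ! j))"
        using Gpos[OF j] unfolding G_def zless_nat_conj by simp
      then show "snd (ds ! j) < gr N0 ds ! j" unfolding nth[OF j] by simp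
    qed
    have coord: "aa ds (\<kappa> i) = real (nat \<lfloor>y$i * G (\<kappa> i)\<rfloor>)" "bb ds (\<kappa> i) = real (nat \<lfloor>z$i * G (\<kappa> i)\<rfloor>)"
                "gg N0 ds (\<kappa> i) = G (\<kappa> i)" for i
      using nth[of "\<kappa> i"] \<kappa>_lt[of i] by (simp_all add: aa_def bb_def gg_def G_def Y_def Z_def \<sigma>_\<kappa> d_def)
    have Gp: "G (\<kappa> i) > 0" for i using Gpos[of "\<kappa> i"] \<kappa>_lt[of i] by (simp add: d_def)
    have LB: "Lbox N0 ds \<subseteq> box_co y z"
    proof
      fix x assume "x \<in> Lbox N0 ds"
      then have H: "(aa ds (\<kappa> i) + 1) / gg N0 ds (\<kappa> i) \<le> x$i \<and> x$i < bb ds (\<kappa> i) / gg N0 ds (\<kappa> i)" for i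
        by (auto simp: Lbox_def box_co_def)
      have "y$i \<le> x$i \<and> x$i < z$i" for i
        using H[of i] floor_bounds[OF y0[of i] Gp[of i]] floor_bounds[OF _ Gp[of i], of "z$i"] y0[of i] yz[of i]
        unfolding coord by linarith
      then show "x \<in> box_co y z" by (simp add: box_co_def)
    qed
    have UB: "box_co y z \<subseteq> Ubox N0 ds"
    proof
      fix x assume "x \<in> box_co y z"
      then have H: "y$i \<le> x$i \<and> x$i < z$i" for i by (auto simp: box_co_def)
      have "aa ds (\<kappa> i) / gg N0 ds (\<kappa> i) \<le> x$i \<and> x$i < (bb ds (\<kappa> i) + 1) / gg N0 ds (\<kappa> i)" for i
        using H[of i] floor_bounds[OF y0[of i] Gp[of i]] floor_bounds[OF _ Gp[of i], of "z$i"] y0[of i] yz[of i]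
        unfolding coord by linarith
      then show "x \<in> Ubox N0 ds" by (simp add: Ubox_def box_co_def)
    qed
    have "f \<in> bracket (indicator (Lbox N0 ds)) (indicator (Ubox N0 ds))"
      unfolding bracket_def f using L1f LB UB f
      by (auto split: split_indicator)
    then show ?thesis using ds_in by blast
  qed
qed

lemma bn_bound:
  assumes N0: "N0 \<ge> 1" and e: "2 * real CARD('n) / real N0 \<le> eps"
  shows "bracketing_number eps (rect_class :: (real^'n \<Rightarrow> real) set) \<le> ereal (real (Sb CARD('n) N0))"
proof -
  define B where "B = (\<lambda>ds. (indicator (Lbox N0 ds) :: real^'n \<Rightarrow> real, indicator (Ubox N0 ds) :: real^'n \<Rightarrow> real)) ` Dset N0 CARD('n)"
  have fin: "finite B" unfolding B_def using Dset_card by simp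
  have card: "card B \<le> Sb CARD('n) N0"
    unfolding B_def using card_image_le[of "Dset N0 CARD('n)"] Dset_card[of N0 "CARD('n)"] Gc_le_Sb[of "CARD('n)" N0]
    by (meson order_trans)
  have br: "\<forall>(l,u)\<in>B. eps_bracket eps l u"
  proof -
    have "eps_bracket eps (indicator (Lbox N0 ds)) (indicator (Ubox N0 ds))" if ds: "ds \<in> Dset N0 CARD('n)" for ds
      unfolding eps_bracket_def
    proof (intro conjI)
      show "L1_cube (indicator (Lbox N0 ds) :: real^'n \<Rightarrow> real)" unfolding Lbox_def by (rule L1_ind[OF box_co_sets])
      show "L1_cube (indicator (Ubox N0 ds) :: real^'n \<Rightarrow> real)" unfolding Ubox_def by (rule L1_ind[OF box_co_sets])
      show "L1_norm (\<lambda>x. indicator (Ubox N0 ds) x - indicator (Lbox N0 ds) x :: real) \<le> eps"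
        using err_bound[OF ds N0] e by linarith
    qed
    then show ?thesis unfolding B_def by blast
  qed
  have cov: "rect_class \<subseteq> (\<Union>(l,u)\<in>B. bracket l u)"
    using covers[OF N0] unfolding B_def by fastforce
  have "bracketing_number eps (rect_class :: (real^'n \<Rightarrow> real) set) \<le> ereal (real (card B))"
    unfolding bracketing_number_def by (rule INF_lower) (use fin br cov in blast)
  also have "\<dots> \<le> ereal (real (Sb CARD('n) N0))" using card by simp
  finally show ?thesis .
qed

end

theorem mainTheorem6:
  fixes eps :: real
  assumes "CARD('n::finite) \<ge> 3" and "0 < eps" and "eps \<le> 1"
  shows "bracketing_number eps (rect_class :: (real^'n \<Rightarrow> real) set)
           \<le> ereal ((real CARD('n) ^ CARD('n) / fact CARD('n))\<^sup>2
                   * (2 / eps - 1/2 * (1 - 3 / real CARD('n))) ^ (2 * CARD('n)))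
       \<and> (real CARD('n) ^ CARD('n) / fact CARD('n))\<^sup>2
                   * (2 / eps - 1/2 * (1 - 3 / real CARD('n))) ^ (2 * CARD('n))
           \<le> (real CARD('n) ^ CARD('n) / fact CARD('n))\<^sup>2 * (2 / eps) ^ (2 * CARD('n))"
proof -
  define d where "d = CARD('n)"
  have d3: "d \<ge> 3" using assms(1) by (simp add: d_def)
  obtain \<sigma> :: "nat \<Rightarrow> 'n" where s: "bij_betw \<sigma> {0..<card (UNIV::'n set)} UNIV"
    using ex_bij_betw_nat_finite[of "UNIV :: 'n set"] by auto
  have s': "bij_betw \<sigma> {..<CARD('n)} UNIV" using s by (simp add: atLeast0LessThan)
  interpret coords \<sigma> by (rule coords.intro[OF s'])
  define X where "X = 2 / eps - 1/2 * (1 - 3 / real d)"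
  define N0 where "N0 = nat \<lceil>2 * real d / eps\<rceil>"
  have ge: "2 * real d / eps \<ge> 2 * real d" using assms(2,3) d3
    by (simp add: le_divide_eq)
  have N0a: "real N0 \<ge> 2 * real d / eps" unfolding N0_def by linarith
  have N0b: "real N0 < 2 * real d / eps + 1" unfolding N0_def
    using ge d3 by (simp add: of_nat_nat) linarith
  have N0d: "2 * d \<le> N0" using N0a ge by linarith
  have N01: "N0 \<ge> 1" using N0d d3 by simp
  have e: "2 * real d / real N0 \<le> eps"
    using N0a assms(2) N01 by (simp add: divide_le_eq mult.commute le_divide_eq)
  have bn: "bracketing_number eps (rect_class :: (real^'n \<Rightarrow> real) set) \<le> ereal (real (Sb d N0))"
    using bn_bound[OF N01] e unfolding d_def by simp
  have Xnn: "0 \<le> X" and Xle: "X \<le> 2 / eps"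
  proof -
    have "2 / eps \<ge> 2" using assms(2,3) by (simp add: le_divide_eq)
    moreover have "0 \<le> 1/2 * (1 - 3 / real d)" "1/2 * (1 - 3 / real d) \<le> 1/2" using d3 by (simp_all add: field_simps)
    ultimately show "0 \<le> X" "X \<le> 2 / eps" unfolding X_def by linarith+
  qed
  have key: "real N0 + 1/2 - real d / 2 \<le> real d * X"
  proof -
    have "real d * X = 2 * real d / eps - real d / 2 + 3/2" unfolding X_def using d3 by (simp add: field_simps)
    then show ?thesis using N0b by linarith
  qed
  have nn: "0 \<le> real N0 + 1/2 - real d / 2" using N0d by simp
  have "real (Sb d N0) * (fact d)^2 \<le> (real N0 + 1/2 - real d/2) ^ (2*d)"
    by (rule Sb_final[OF d3 N0d])
  also have "\<dots> \<le> (real d * X) ^ (2*d)" by (intro power_mono key nn)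
  also have "\<dots> = (real d ^ d) ^ 2 * X ^ (2*d)" by (simp add: power_mult_distrib power_mult mult.commute)
  finally have "real (Sb d N0) \<le> (real d ^ d / fact d)^2 * X ^ (2*d)"
    by (simp add: power_divide field_simps)
  then have c1: "bracketing_number eps (rect_class :: (real^'n \<Rightarrow> real) set) \<le> ereal ((real d ^ d / fact d)^2 * X ^ (2*d))"
    using bn by (meson ereal_less_eq(3) order_trans)
  have c2: "(real d ^ d / fact d)^2 * X ^ (2*d) \<le> (real d ^ d / fact d)^2 * (2 / eps) ^ (2*d)"
    by (intro mult_left_mono power_mono Xnn Xle) simp
  show ?thesis using c1 c2 unfolding X_def d_def by simp
qed

end
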